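(* Let $\alpha\in(0,1)$ and suppose: $\mathcal{S}_0$ is a VC-major class of measurable functions $\mathcal{X}^2\to[0,1]$ of finite VC dimension; there is $\kappa\in(0,1)$ with $\kappa\le p\le1-\kappa$ where $p=\sum_{k=1}^Kp_k^2$; there exist $c$ and $a\in[0,1]$ such that almost surely $\mathbb{E}_{X'}\big[|\eta(X,X')-Q^*_\alpha|^{-a}\big]\le c$; and $S^*\in\mathcal{S}_0$, where $S^*(x,x')=\mathbb{I}\{\eta(x,x')\ge Q^*_\alpha\}$. For $S\in\mathcal{S}_0$ define $$Q_S((x,y),(x',y'))=\mathbb{I}\{y=y'\}\big(S(x,x')-S^*(x,x')\big)-\mathbb{E}\big[\mathbb{I}\{Y=Y'\}(S(X,X')-S^*(X,X'))\big],$$ and $q_S(x,y)=\mathbb{E}[Q_S((X,Y),(x,y))]$. Then for any $S\in\mathcal{S}_0$, $$\mathrm{Var}(q_S(X,Y))\le c\Big[(1-Q^*_\alpha)\,p\,\big(R^+(S^* )-R^+(S)\big)+(1-p)\,Q^*_\alpha\big(R^-(S)-R^-(S^* )\big)\Big]^a.$$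
   Context: $(X,Y)$ is a random pair with $X\in\mathcal{X}\subset\mathbb{R}^d$, $Y\in\{1,\dots,K\}$, $p_k=\mathbb{P}\{Y=k\}>0$, $\eta_k(x)=\mathbb{P}\{Y=k\mid X=x\}$; $(X',Y')$ is an independent copy, $Z=2\mathbb{I}\{Y=Y'\}-1$, $\eta(x,x')=\sum_k\eta_k(x)\eta_k(x')$. Assume the conditional cdf of $\eta(X,X')$ given $Z=-1$ is invertible, and let $Q^*_\alpha$ be its quantile at level $1-\alpha$. $R^+(S)=\mathbb{E}[S(X,X')\mid Z=+1]$, $R^-(S)=\mathbb{E}[S(X,X')\mid Z=-1]$. $\mathbb{E}_{X'}$ denotes expectation with respect to $X'$ only. A class is VC-major if its family of strict superlevel sets is a VC class. *)

theory Defs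
  imports "HOL-Probability.Probability"
begin

definition shatters :: "'b set set \<Rightarrow> 'b set \<Rightarrow> bool" where
  "shatters C A \<longleftrightarrow> (\<forall>B\<subseteq>A. \<exists>U\<in>C. U \<inter> A = B)"

definition VC_class :: "'b set set \<Rightarrow> bool" where
  "VC_class C \<longleftrightarrow> (\<exists>n::nat. \<forall>A. finite A \<and> shatters C A \<longrightarrow> card A \<le> n)"

definition VC_major_on :: "'b set \<Rightarrow> ('b \<Rightarrow> real) set \<Rightarrow> bool" where
  "VC_major_on Om F \<longleftrightarrow> VC_class {{z \<in> Om. t < f z} | f t. f \<in> F}"

text \<open>D is the law of (X,Y) on MX x {1..K}; the independent copy is handled via D \<Otimes> D.
  A pair of observations is w = ((x,y),(x',y')).\<close>

definition pk :: "('a \<times> nat) measure \<Rightarrow> nat \<Rightarrow> real" where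
  "pk D k = measure D {z \<in> space D. snd z = k}"

definition pcoef :: "('a \<times> nat) measure \<Rightarrow> nat \<Rightarrow> real" where
  "pcoef D K = (\<Sum>k=1..K. (pk D k)\<^sup>2)"

definition cond_prob_version ::
  "'a measure \<Rightarrow> ('a \<times> nat) measure \<Rightarrow> nat \<Rightarrow> (nat \<Rightarrow> 'a \<Rightarrow> real) \<Rightarrow> bool" where
  "cond_prob_version MX D K eta \<longleftrightarrow>
     (\<forall>k\<in>{1..K}. eta k \<in> borel_measurable MX \<and> integrable (distr D MX fst) (eta k) \<and>
        (\<forall>A\<in>sets MX. measure D (A \<times> {k}) = (LINT x:A|distr D MX fst. eta k x)))"

definition eta2 :: "(nat \<Rightarrow> 'a \<Rightarrow> real) \<Rightarrow> nat \<Rightarrow> 'a \<Rightarrow> 'a \<Rightarrow> real" where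
  "eta2 eta K x x' = (\<Sum>k=1..K. eta k x * eta k x')"

definition same_label :: "('a \<times> nat) \<times> ('a \<times> nat) \<Rightarrow> bool" where
  "same_label w \<longleftrightarrow> snd (fst w) = snd (snd w)"

text \<open>Conditional cdf of eta(X,X') given Z = -1 (i.e. Y \<noteq> Y').\<close>
definition cdf_neg :: "('a \<times> nat) measure \<Rightarrow> (nat \<Rightarrow> 'a \<Rightarrow> real) \<Rightarrow> nat \<Rightarrow> real \<Rightarrow> real" where
  "cdf_neg D eta K t =
     measure (D \<Otimes>\<^sub>M D) {w \<in> space (D \<Otimes>\<^sub>M D). \<not> same_label w \<and> eta2 eta K (fst (fst w)) (fst (snd w)) \<le> t}
     / measure (D \<Otimes>\<^sub>M D) {w \<in> space (D \<Otimes>\<^sub>M D). \<not> same_label w}"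

definition Qstar :: "('a \<times> nat) measure \<Rightarrow> (nat \<Rightarrow> 'a \<Rightarrow> real) \<Rightarrow> nat \<Rightarrow> real \<Rightarrow> real" where
  "Qstar D eta K \<alpha> = Inf {t. 1 - \<alpha> \<le> cdf_neg D eta K t}"

definition Sstar :: "(nat \<Rightarrow> 'a \<Rightarrow> real) \<Rightarrow> nat \<Rightarrow> real \<Rightarrow> 'a \<Rightarrow> 'a \<Rightarrow> real" where
  "Sstar eta K Q x x' = (if Q \<le> eta2 eta K x x' then 1 else 0)"

definition Rplus :: "('a \<times> nat) measure \<Rightarrow> ('a \<Rightarrow> 'a \<Rightarrow> real) \<Rightarrow> real" where
  "Rplus D S =
     (\<integral>w. (if same_label w then S (fst (fst w)) (fst (snd w)) else 0) \<partial>(D \<Otimes>\<^sub>M D))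
     / measure (D \<Otimes>\<^sub>M D) {w \<in> space (D \<Otimes>\<^sub>M D). same_label w}"

definition Rminus :: "('a \<times> nat) measure \<Rightarrow> ('a \<Rightarrow> 'a \<Rightarrow> real) \<Rightarrow> real" where
  "Rminus D S =
     (\<integral>w. (if same_label w then 0 else S (fst (fst w)) (fst (snd w))) \<partial>(D \<Otimes>\<^sub>M D))
     / measure (D \<Otimes>\<^sub>M D) {w \<in> space (D \<Otimes>\<^sub>M D). \<not> same_label w}"

definition QS :: "('a \<times> nat) measure \<Rightarrow> ('a \<Rightarrow> 'a \<Rightarrow> real) \<Rightarrow> ('a \<Rightarrow> 'a \<Rightarrow> real)
                  \<Rightarrow> ('a \<times> nat) \<Rightarrow> ('a \<times> nat) \<Rightarrow> real" where
  "QS D S S0 z z' =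
     (if snd z = snd z' then 1 else 0) * (S (fst z) (fst z') - S0 (fst z) (fst z'))
     - (\<integral>w. (if same_label w then 1 else 0) *
              (S (fst (fst w)) (fst (snd w)) - S0 (fst (fst w)) (fst (snd w))) \<partial>(D \<Otimes>\<^sub>M D))"

definition qS :: "('a \<times> nat) measure \<Rightarrow> ('a \<Rightarrow> 'a \<Rightarrow> real) \<Rightarrow> ('a \<Rightarrow> 'a \<Rightarrow> real)
                  \<Rightarrow> ('a \<times> nat) \<Rightarrow> real" where
  "qS D S S0 z' = (\<integral>z. QS D S S0 z z' \<partial>D)"

text \<open>|t|^(-a) as an extended nonnegative real, with |0|^(-a) = \<infinity> for a > 0 and
  |t|^0 = 1.\<close>
definition negpow :: "real \<Rightarrow> real \<Rightarrow> ennreal" where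
  "negpow a t = (if a = 0 then 1 else if t = 0 then \<infinity> else ennreal (\<bar>t\<bar> powr (- a)))"

text \<open>b^a for b \<ge> 0 with the convention 0^0 = 1 (Isabelle's powr has 0 powr 0 = 0).\<close>
definition pow0 :: "real \<Rightarrow> real \<Rightarrow> real" where
  "pow0 b a = (if a = 0 then 1 else b powr a)"

end

theory Submission
  imports Defs
begin



lemma integrable_prod_fun:
  fixes f g :: "_ \<Rightarrow> real"
  assumes "sigma_finite_measure M1" "sigma_finite_measure M2"
    and f: "integrable M1 f" and g: "integrable M2 g"
  shows "integrable (M1 \<Otimes>\<^sub>M M2) (\<lambda>w. f (fst w) * g (snd w))"
proof -
  interpret M2: sigma_finite_measure M2 by fact
  have [measurable]: "f \<in> borel_measurable M1" "g \<in> borel_measurable M2" using f g by auto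
  have "(\<integral>\<^sup>+w. ennreal (norm (f (fst w) * g (snd w))) \<partial>(M1 \<Otimes>\<^sub>M M2))
      = (\<integral>\<^sup>+x. \<integral>\<^sup>+y. ennreal (norm (f (fst (x,y)) * g (snd (x,y)))) \<partial>M2 \<partial>M1)"
    by (rule M2.nn_integral_fst[symmetric]) measurable
  also have "\<dots> = (\<integral>\<^sup>+x. ennreal (norm (f x)) * (\<integral>\<^sup>+y. ennreal (norm (g y)) \<partial>M2) \<partial>M1)"
    by (simp add: abs_mult ennreal_mult nn_integral_cmult)
  also have "\<dots> = (\<integral>\<^sup>+x. ennreal (norm (f x)) \<partial>M1) * (\<integral>\<^sup>+y. ennreal (norm (g y)) \<partial>M2)"
    by (simp add: nn_integral_multc)
  also have "\<dots> < \<infinity>"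
    using f g unfolding integrable_iff_bounded by (simp add: ennreal_mult_less_top)
  finally show ?thesis unfolding integrable_iff_bounded by simp
qed

locale L3 =
  fixes MX :: "'a measure" and D :: "('a \<times> nat) measure" and K :: nat
    and eta :: "nat \<Rightarrow> 'a \<Rightarrow> real"
  assumes D_prob: "prob_space D"
    and D_sets: "sets D = sets (MX \<Otimes>\<^sub>M count_space {1..K})"
    and eta_cond: "cond_prob_version MX D K eta"
begin

definition mu where "mu = distr D MX fst"

lemma space_D: "space D = space MX \<times> {1..K}"
  using sets_eq_imp_space_eq[OF D_sets] by (simp add: space_pair_measure)

lemma meas_fst[measurable]: "fst \<in> measurable D MX"
  by (subst measurable_cong_sets[OF D_sets refl]) simp

lemma meas_snd: "snd \<in> measurable D (count_space {1..K})"
  by (subst measurable_cong_sets[OF D_sets refl]) simp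

lemma meas_snd_real[measurable]: "(\<lambda>z. real (snd z)) \<in> borel_measurable D"
  using measurable_compose[OF meas_snd, of "\<lambda>k. real k" borel] by simp

lemma meas_sameset[measurable]: "{w \<in> space (D \<Otimes>\<^sub>M D). same_label w} \<in> sets (D \<Otimes>\<^sub>M D)"
proof -
  have "{w \<in> space (D \<Otimes>\<^sub>M D). same_label w} = {w \<in> space (D \<Otimes>\<^sub>M D). real (snd (fst w)) = real (snd (snd w))}"
    by (auto simp: same_label_def)
  also have "\<dots> \<in> sets (D \<Otimes>\<^sub>M D)" by measurable
  finally show ?thesis .
qed

lemma pred_same[measurable]: "Measurable.pred (D \<Otimes>\<^sub>M D) same_label"
  proof -
  have "{w \<in> space (D \<Otimes>\<^sub>M D). same_label w} \<in> sets (D \<Otimes>\<^sub>M D)" by (rule meas_sameset)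
  then show ?thesis by (subst Measurable.pred_def) assumption
qed

lemma meas_labelset[measurable]: "{z \<in> space D. snd z = k} \<in> sets D"
proof -
  have "{z \<in> space D. snd z = k} = {z \<in> space D. real (snd z) = real k}" by auto
  also have "\<dots> \<in> sets D" by measurable
  finally show ?thesis .
qed

lemma prob_D: "prob_space (D \<Otimes>\<^sub>M D)"
  using D_prob by (simp add: prob_space_pair)

lemma mu_prob: "prob_space mu"
  unfolding mu_def by (intro prob_space.prob_space_distr D_prob meas_fst)

lemma sets_mu[simp, measurable_cong]: "sets mu = sets MX" by (simp add: mu_def)
lemma space_mu[simp]: "space mu = space MX" by (simp add: mu_def)

lemma sets_mumu[measurable_cong]: "sets (mu \<Otimes>\<^sub>M mu) = sets (MX \<Otimes>\<^sub>M MX)"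
  by (rule sets_pair_measure_cong) simp_all

lemma space_mumu[simp]: "space (mu \<Otimes>\<^sub>M mu) = space MX \<times> space MX"
  by (simp add: space_pair_measure)

lemma meas_mumu: "f \<in> borel_measurable (MX \<Otimes>\<^sub>M MX) \<Longrightarrow> f \<in> borel_measurable (mu \<Otimes>\<^sub>M mu)"
  by (subst measurable_cong_sets[OF sets_mumu refl]) simp

lemma eta_meas[measurable]: "k \<in> {1..K} \<Longrightarrow> eta k \<in> borel_measurable MX"
  using eta_cond by (simp add: cond_prob_version_def)

lemma eta_int: "k \<in> {1..K} \<Longrightarrow> integrable mu (eta k)"
  using eta_cond by (simp add: cond_prob_version_def mu_def)

lemma eta_set: "k \<in> {1..K} \<Longrightarrow> A \<in> sets MX \<Longrightarrow> measure D (A \<times> {k}) = (\<integral>x. indicator A x * eta k x \<partial>mu)"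
  using eta_cond by (simp add: cond_prob_version_def mu_def set_lebesgue_integral_def)


lemma eta_nonneg: assumes k: "k \<in> {1..K}" shows "AE x in mu. 0 \<le> eta k x"
proof -
  interpret mu: prob_space mu by (rule mu_prob)
  define A where "A = {x \<in> space MX. eta k x < 0}"
  have A[measurable]: "A \<in> sets MX" unfolding A_def using k by measurable
  have i: "integrable mu (\<lambda>x. - (indicator A x * eta k x))"
    using integrable_real_mult_indicator[OF _ eta_int[OF k], of A] A by (simp add: mult.commute)
  have "0 \<le> measure D (A \<times> {k})" by simp
  then have "0 \<le> (\<integral>x. indicator A x * eta k x \<partial>mu)" using eta_set[OF k A] by simp
  moreover have "0 \<le> (\<integral>x. - (indicator A x * eta k x) \<partial>mu)"
    by (rule integral_nonneg_AE) (auto simp: A_def indicator_def)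
  ultimately have "(\<integral>x. - (indicator A x * eta k x) \<partial>mu) = 0"
    by (simp only: Bochner_Integration.integral_minus)
  then have "AE x in mu. - (indicator A x * eta k x) = 0"
  proof -
    have "AE x in mu. 0 \<le> - (indicator A x * eta k x)"
      by (rule AE_I2) (auto simp: A_def indicator_def)
    with integral_nonneg_eq_0_iff_AE[OF i] \<open>(\<integral>x. - (indicator A x * eta k x) \<partial>mu) = 0\<close>
    show ?thesis by blast
  qed
  moreover have "AE x in mu. x \<in> space mu" by (rule AE_space)
  ultimately show ?thesis
    by eventually_elim (auto simp: A_def indicator_def split: if_splits)
qed

definition nu where "nu k = density mu (\<lambda>x. ennreal (eta k x))"
definition Dk where "Dk k = density D (indicator (space MX \<times> {k}))"

lemma R_sets: "k \<in> {1..K} \<Longrightarrow> space MX \<times> {k} \<in> sets D"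
  using D_sets by simp

lemma emeasure_nu: assumes k: "k \<in> {1..K}" and A: "A \<in> sets MX"
  shows "emeasure (nu k) A = emeasure D (A \<times> {k})"
proof -
  interpret Dp: prob_space D by (rule D_prob)
  have "emeasure (nu k) A = (\<integral>\<^sup>+x. ennreal (eta k x) * indicator A x \<partial>mu)"
    unfolding nu_def using A k by (subst emeasure_density) auto
  also have "\<dots> = (\<integral>\<^sup>+x. ennreal (indicator A x * eta k x) \<partial>mu)"
    by (intro nn_integral_cong) (auto simp: indicator_def)
  also have "\<dots> = ennreal (\<integral>x. indicator A x * eta k x \<partial>mu)"
  proof (rule nn_integral_eq_integral)
    show "integrable mu (\<lambda>x. indicator A x * eta k x)"
      using integrable_real_mult_indicator[OF _ eta_int[OF k], of A] A by (simp add: mult.commute)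
    show "AE x in mu. 0 \<le> indicator A x * eta k x"
      using eta_nonneg[OF k] by eventually_elim (auto simp: indicator_def)
  qed
  also have "\<dots> = emeasure D (A \<times> {k})"
    using eta_set[OF k A] by (simp add: Dp.emeasure_eq_measure)
  finally show ?thesis .
qed

lemma distr_Dk: assumes k: "k \<in> {1..K}" shows "distr (Dk k) MX fst = nu k"
proof (rule measure_eqI)
  show "sets (distr (Dk k) MX fst) = sets (nu k)" by (simp add: nu_def Dk_def)
  fix A assume "A \<in> sets (distr (Dk k) MX fst)"
  then have A[measurable]: "A \<in> sets MX" by simp
  have "emeasure (distr (Dk k) MX fst) A = emeasure (Dk k) (fst -` A \<inter> space D)"
    by (subst emeasure_distr) (auto simp: Dk_def)
  also have "\<dots> = (\<integral>\<^sup>+z. indicator (space MX \<times> {k}) z * indicator (fst -` A \<inter> space D) z \<partial>D)"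
    unfolding Dk_def using R_sets[OF k] by (subst emeasure_density) auto
  also have "\<dots> = (\<integral>\<^sup>+z. indicator (A \<times> {k}) z \<partial>D)"
    using sets.sets_into_space[OF A] k
    by (intro nn_integral_cong) (auto simp: space_D indicator_def)
  also have "\<dots> = emeasure D (A \<times> {k})"
    using A k D_sets by (subst nn_integral_indicator) auto
  also have "\<dots> = emeasure (nu k) A" using emeasure_nu[OF k A] by simp
  finally show "emeasure (distr (Dk k) MX fst) A = emeasure (nu k) A" .
qed


lemma meas_h2:
  assumes "(\<lambda>w. h (fst w) (snd w)) \<in> borel_measurable (MX \<Otimes>\<^sub>M MX)"
  shows "(\<lambda>w. h (fst (fst w)) (fst (snd w))) \<in> borel_measurable (D \<Otimes>\<^sub>M D)"
proof -
  have "(\<lambda>w. (fst (fst w), fst (snd w))) \<in> measurable (D \<Otimes>\<^sub>M D) (MX \<Otimes>\<^sub>M MX)" by measurable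
  from measurable_compose[OF this assms] show ?thesis by (simp add: o_def)
qed

lemma Dk_finite: assumes k: "k \<in> {1..K}" shows "finite_measure (Dk k)"
proof -
  interpret Dp: prob_space D by (rule D_prob)
  have "emeasure (Dk k) (space (Dk k)) = (\<integral>\<^sup>+z. indicator (space MX \<times> {k}) z \<partial>D)"
    unfolding Dk_def using R_sets[OF k] by (subst emeasure_density) auto
  also have "\<dots> = emeasure D (space MX \<times> {k})" using R_sets[OF k] by simp
  finally show ?thesis by (intro finite_measureI) simp
qed

lemma nu_finite: assumes k: "k \<in> {1..K}" shows "finite_measure (nu k)"
proof -
  interpret Dp: prob_space D by (rule D_prob)
  have "emeasure (nu k) (space (nu k)) = emeasure D (space MX \<times> {k})"
    using emeasure_nu[OF k, of "space MX"] by (simp add: nu_def)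
  then show ?thesis by (intro finite_measureI) simp
qed

lemma AE_prod_nonneg: assumes k: "k \<in> {1..K}"
  shows "AE w in mu \<Otimes>\<^sub>M mu. 0 \<le> eta k (fst w) \<and> 0 \<le> eta k (snd w)"
proof -
  interpret mu: prob_space mu by (rule mu_prob)
  interpret pp: pair_sigma_finite mu mu ..
  have [measurable]: "eta k \<in> borel_measurable mu" using eta_meas[OF k] by simp
  show ?thesis
  proof (rule pp.AE_pair_measure)
    show "{w \<in> space (mu \<Otimes>\<^sub>M mu). 0 \<le> eta k (fst w) \<and> 0 \<le> eta k (snd w)} \<in> sets (mu \<Otimes>\<^sub>M mu)"
      by measurable
    show "AE x in mu. AE y in mu. 0 \<le> eta k (fst (x, y)) \<and> 0 \<le> eta k (snd (x, y))"
      using eta_nonneg[OF k] by eventually_elim (use eta_nonneg[OF k] in auto)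
  qed
qed

lemma GIk:
  assumes k: "k \<in> {1..K}"
    and hm: "(\<lambda>(x, y). h x y) \<in> borel_measurable (MX \<Otimes>\<^sub>M MX)"
  shows "(\<integral>w. indicator (space MX \<times> {k}) (fst w) * indicator (space MX \<times> {k}) (snd w)
              * h (fst (fst w)) (fst (snd w)) \<partial>(D \<Otimes>\<^sub>M D))
       = (\<integral>w. eta k (fst w) * eta k (snd w) * h (fst w) (snd w) \<partial>(mu \<Otimes>\<^sub>M mu))"
proof -
  interpret Dp: prob_space D by (rule D_prob)
  interpret mu: prob_space mu by (rule mu_prob)
  interpret Dkf: finite_measure "Dk k" by (rule Dk_finite[OF k])
  interpret nuf: finite_measure "nu k" by (rule nu_finite[OF k])
  define R where "R = space MX \<times> {k}"
  have R[measurable]: "R \<in> sets D" unfolding R_def by (rule R_sets[OF k])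
  have [measurable]: "eta k \<in> borel_measurable MX" using eta_meas[OF k] .
  have hm'[measurable]: "(\<lambda>w. h (fst w) (snd w)) \<in> borel_measurable (MX \<Otimes>\<^sub>M MX)"
    using hm by (simp add: case_prod_beta')
  have sf1: "sigma_finite_measure (Dk k)" ..
  have sf2: "sigma_finite_measure (nu k)" ..
  have "Dk k \<Otimes>\<^sub>M Dk k = density (D \<Otimes>\<^sub>M D) (\<lambda>(x,y). indicator R x * indicator R y)"
    unfolding Dk_def R_def[symmetric]
    by (rule pair_measure_density) (use R Dp.sigma_finite_measure_axioms sf1 in \<open>auto simp: Dk_def R_def\<close>)
  also have "\<dots> = density (D \<Otimes>\<^sub>M D) (\<lambda>w. ennreal (indicator R (fst w) * indicator R (snd w)))"
    by (intro arg_cong2[where f=density] refl ext) (auto simp: indicator_def)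
  finally have DD: "Dk k \<Otimes>\<^sub>M Dk k = density (D \<Otimes>\<^sub>M D) (\<lambda>w. ennreal (indicator R (fst w) * indicator R (snd w)))" .
  have "(\<integral>w. indicator R (fst w) * indicator R (snd w) * h (fst (fst w)) (fst (snd w)) \<partial>(D \<Otimes>\<^sub>M D))
      = (\<integral>w. h (fst (fst w)) (fst (snd w)) \<partial>(Dk k \<Otimes>\<^sub>M Dk k))"
    unfolding DD by (subst integral_density) (auto intro: meas_h2[OF hm'])
  also have "\<dots> = (\<integral>w. h (fst w) (snd w) \<partial>(distr (Dk k \<Otimes>\<^sub>M Dk k) (MX \<Otimes>\<^sub>M MX) (\<lambda>(z, z'). (fst z, fst z'))))"
    by (subst integral_distr) (auto simp: Dk_def case_prod_beta')
  also have "distr (Dk k \<Otimes>\<^sub>M Dk k) (MX \<Otimes>\<^sub>M MX) (\<lambda>(z, z'). (fst z, fst z')) = distr (Dk k) MX fst \<Otimes>\<^sub>M distr (Dk k) MX fst"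
    by (rule pair_measure_distr[symmetric]) (use distr_Dk[OF k] sf2 in \<open>auto simp: Dk_def\<close>)
  also have "\<dots> = nu k \<Otimes>\<^sub>M nu k" by (simp add: distr_Dk[OF k])
  also have "\<dots> = density (mu \<Otimes>\<^sub>M mu) (\<lambda>(x,y). ennreal (eta k x) * ennreal (eta k y))"
    unfolding nu_def
    by (rule pair_measure_density) (use mu.sigma_finite_measure_axioms sf2 in \<open>auto simp: nu_def\<close>)
  also have "\<dots> = density (mu \<Otimes>\<^sub>M mu) (\<lambda>w. ennreal (eta k (fst w) * eta k (snd w)))"
    by (rule density_cong[OF _ _ AE_mp[OF AE_prod_nonneg[OF k] AE_I2]]) (auto simp: ennreal_mult)
  also have "(\<integral>w. h (fst w) (snd w) \<partial>\<dots>) = (\<integral>w. eta k (fst w) * eta k (snd w) * h (fst w) (snd w) \<partial>(mu \<Otimes>\<^sub>M mu))"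
    by (subst integral_density[OF _ _ AE_mp[OF AE_prod_nonneg[OF k] AE_I2]]) auto
  finally show ?thesis unfolding R_def .
qed


lemma eta_prod_int: assumes k: "k \<in> {1..K}"
  shows "integrable (mu \<Otimes>\<^sub>M mu) (\<lambda>w. eta k (fst w) * eta k (snd w))"
  using integrable_prod_fun[OF _ _ eta_int[OF k] eta_int[OF k]] mu_prob
  by (simp add: prob_space_imp_sigma_finite)

lemma int_bounded_eta:
  assumes k: "k \<in> {1..K}"
    and hm: "(\<lambda>w. h (fst w) (snd w)) \<in> borel_measurable (MX \<Otimes>\<^sub>M MX)"
    and hb: "\<forall>x\<in>space MX. \<forall>y\<in>space MX. \<bar>h x y\<bar> \<le> B"
  shows "integrable (mu \<Otimes>\<^sub>M mu) (\<lambda>w. eta k (fst w) * eta k (snd w) * h (fst w) (snd w))"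
proof (rule Bochner_Integration.integrable_bound[where f="\<lambda>w. \<bar>B\<bar> * (eta k (fst w) * eta k (snd w))"])
  show "integrable (mu \<Otimes>\<^sub>M mu) (\<lambda>w. \<bar>B\<bar> * (eta k (fst w) * eta k (snd w)))"
    using eta_prod_int[OF k] by simp
  have [measurable]: "eta k \<in> borel_measurable MX" using eta_meas[OF k] .
  show "(\<lambda>w. eta k (fst w) * eta k (snd w) * h (fst w) (snd w)) \<in> borel_measurable (mu \<Otimes>\<^sub>M mu)"
    by (rule meas_mumu) (use hm in measurable)
  show "AE w in mu \<Otimes>\<^sub>M mu. norm (eta k (fst w) * eta k (snd w) * h (fst w) (snd w))
          \<le> norm (\<bar>B\<bar> * (eta k (fst w) * eta k (snd w)))"
  proof (rule AE_I2)
    fix w assume "w \<in> space (mu \<Otimes>\<^sub>M mu)"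
    then have "\<bar>h (fst w) (snd w)\<bar> \<le> B" using hb by (auto simp: space_pair_measure)
    then have "\<bar>h (fst w) (snd w)\<bar> \<le> \<bar>B\<bar>" by linarith
    then show "norm (eta k (fst w) * eta k (snd w) * h (fst w) (snd w))
          \<le> norm (\<bar>B\<bar> * (eta k (fst w) * eta k (snd w)))"
    proof -
      have "\<bar>h (fst w) (snd w)\<bar> * (\<bar>eta k (fst w)\<bar> * \<bar>eta k (snd w)\<bar>)
           \<le> \<bar>B\<bar> * (\<bar>eta k (fst w)\<bar> * \<bar>eta k (snd w)\<bar>)"
        by (rule mult_right_mono) (use \<open>\<bar>h (fst w) (snd w)\<bar> \<le> \<bar>B\<bar>\<close> in auto)
      then show ?thesis by (simp add: abs_mult mult_ac)
    qed
  qed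
qed


lemma GI:
  assumes hm: "(\<lambda>w. h (fst w) (snd w)) \<in> borel_measurable (MX \<Otimes>\<^sub>M MX)"
    and hb: "\<forall>x\<in>space MX. \<forall>y\<in>space MX. \<bar>h x y\<bar> \<le> B"
  shows "(\<integral>w. (if same_label w then h (fst (fst w)) (fst (snd w)) else 0) \<partial>(D \<Otimes>\<^sub>M D))
       = (\<integral>w. eta2 eta K (fst w) (snd w) * h (fst w) (snd w) \<partial>(mu \<Otimes>\<^sub>M mu))"
proof -
  interpret DD: prob_space "D \<Otimes>\<^sub>M D" by (rule prob_D)
  define I where "I k w = indicator (space MX \<times> {k}) (fst w) * indicator (space MX \<times> {k}) (snd w)
              * h (fst (fst w)) (fst (snd w))" for k and w :: "('a \<times> nat) \<times> ('a \<times> nat)"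
  have hm2[measurable]: "(\<lambda>w. h (fst (fst w)) (fst (snd w))) \<in> borel_measurable (D \<Otimes>\<^sub>M D)"
    by (rule meas_h2[OF hm])
  have eq1: "(\<integral>w. (if same_label w then h (fst (fst w)) (fst (snd w)) else 0) \<partial>(D \<Otimes>\<^sub>M D))
      = (\<integral>w. (\<Sum>k\<in>{1..K}. I k w) \<partial>(D \<Otimes>\<^sub>M D))"
  proof (rule Bochner_Integration.integral_cong[OF refl])
    fix w assume "w \<in> space (D \<Otimes>\<^sub>M D)"
    then obtain x y x' y' where w: "w = ((x,y),(x',y'))" "x \<in> space MX" "x' \<in> space MX"
      "y \<in> {1..K}" "y' \<in> {1..K}"
      by (auto simp: space_pair_measure space_D)
    have "(\<Sum>k\<in>{1..K}. I k w) = (\<Sum>k\<in>{1..K}. if k = y then (if y = y' then h x x' else 0) else 0)"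
      by (intro sum.cong refl) (auto simp: I_def w indicator_def)
    also have "\<dots> = (if y = y' then h x x' else 0)" using w by simp
    finally show "(if same_label w then h (fst (fst w)) (fst (snd w)) else 0) = (\<Sum>k\<in>{1..K}. I k w)"
      by (simp add: w same_label_def)
  qed
  have intI: "integrable (D \<Otimes>\<^sub>M D) (I k)" if k: "k \<in> {1..K}" for k
  proof (rule DD.integrable_const_bound[where B=B])
    have [measurable]: "space MX \<times> {k} \<in> sets D" by (rule R_sets[OF k])
    show "I k \<in> borel_measurable (D \<Otimes>\<^sub>M D)" unfolding I_def by measurable
    show "AE w in D \<Otimes>\<^sub>M D. norm (I k w) \<le> B"
    proof (rule AE_I2)
      fix w assume "w \<in> space (D \<Otimes>\<^sub>M D)"
      then have "fst (fst w) \<in> space MX" "fst (snd w) \<in> space MX"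
        by (auto simp: space_pair_measure space_D)
      then have hB: "\<bar>h (fst (fst w)) (fst (snd w))\<bar> \<le> B" using hb by blast
      then have "0 \<le> B" by linarith
      then show "norm (I k w) \<le> B" using hB by (auto simp: I_def indicator_def)
    qed
  qed
  have "(\<integral>w. (\<Sum>k\<in>{1..K}. I k w) \<partial>(D \<Otimes>\<^sub>M D)) = (\<Sum>k\<in>{1..K}. \<integral>w. I k w \<partial>(D \<Otimes>\<^sub>M D))"
    by (rule Bochner_Integration.integral_sum) (rule intI)
  also have "\<dots> = (\<Sum>k\<in>{1..K}. \<integral>w. eta k (fst w) * eta k (snd w) * h (fst w) (snd w) \<partial>(mu \<Otimes>\<^sub>M mu))"
    by (intro sum.cong refl) (unfold I_def, rule GIk, auto simp: case_prod_beta' hm)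
  also have "\<dots> = (\<integral>w. (\<Sum>k\<in>{1..K}. eta k (fst w) * eta k (snd w) * h (fst w) (snd w)) \<partial>(mu \<Otimes>\<^sub>M mu))"
    by (rule Bochner_Integration.integral_sum[symmetric]) (rule int_bounded_eta[OF _ hm hb])
  also have "\<dots> = (\<integral>w. eta2 eta K (fst w) (snd w) * h (fst w) (snd w) \<partial>(mu \<Otimes>\<^sub>M mu))"
    by (simp add: eta2_def sum_distrib_right)
  finally show ?thesis using eq1 by simp
qed


lemma GT:
  fixes h :: "'a \<Rightarrow> 'a \<Rightarrow> real"
  assumes hm: "(\<lambda>w. h (fst w) (snd w)) \<in> borel_measurable (MX \<Otimes>\<^sub>M MX)"
  shows "(\<integral>w. h (fst (fst w)) (fst (snd w)) \<partial>(D \<Otimes>\<^sub>M D))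
       = (\<integral>w. h (fst w) (snd w) \<partial>(mu \<Otimes>\<^sub>M mu))"
proof -
  interpret mu: prob_space mu by (rule mu_prob)
  have "mu \<Otimes>\<^sub>M mu = distr (D \<Otimes>\<^sub>M D) (MX \<Otimes>\<^sub>M MX) (\<lambda>(x, y). (fst x, fst y))"
    unfolding mu_def
    by (rule pair_measure_distr) (use mu.sigma_finite_measure_axioms in \<open>auto simp: mu_def\<close>)
  then have "(\<integral>w. h (fst w) (snd w) \<partial>(mu \<Otimes>\<^sub>M mu))
     = (\<integral>w. h (fst w) (snd w) \<partial>distr (D \<Otimes>\<^sub>M D) (MX \<Otimes>\<^sub>M MX) (\<lambda>(x, y). (fst x, fst y)))" by simp
  also have "\<dots> = (\<integral>w. h (fst (fst w)) (fst (snd w)) \<partial>(D \<Otimes>\<^sub>M D))"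
  proof -
    have g: "(\<lambda>(x, y). (fst x, fst y)) \<in> measurable (D \<Otimes>\<^sub>M D) (MX \<Otimes>\<^sub>M MX)" by measurable
    show ?thesis using integral_distr[OF g hm] by (simp add: case_prod_beta')
  qed
  finally show ?thesis by simp
qed

lemma int_eta: assumes k: "k \<in> {1..K}" shows "(\<integral>x. eta k x \<partial>mu) = pk D k"
proof -
  have "(\<integral>x. eta k x \<partial>mu) = (\<integral>x. indicator (space MX) x * eta k x \<partial>mu)"
    by (rule Bochner_Integration.integral_cong) (auto simp: indicator_def)
  also have "\<dots> = measure D (space MX \<times> {k})" using eta_set[OF k, of "space MX"] by simp
  also have "space MX \<times> {k} = {z \<in> space D. snd z = k}" using k by (auto simp: space_D)
  finally show ?thesis by (simp add: pk_def)
qed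

lemma P_same: "measure (D \<Otimes>\<^sub>M D) {w \<in> space (D \<Otimes>\<^sub>M D). same_label w} = pcoef D K"
proof -
  interpret mu: prob_space mu by (rule mu_prob)
  interpret pp: pair_sigma_finite mu mu ..
  have "measure (D \<Otimes>\<^sub>M D) {w \<in> space (D \<Otimes>\<^sub>M D). same_label w}
     = (\<integral>w. indicator {w \<in> space (D \<Otimes>\<^sub>M D). same_label w} w \<partial>(D \<Otimes>\<^sub>M D))" by simp
  also have "\<dots> = (\<integral>w. (if same_label w then (\<lambda>x y. 1::real) (fst (fst w)) (fst (snd w)) else 0) \<partial>(D \<Otimes>\<^sub>M D))"
    by (rule Bochner_Integration.integral_cong) (auto simp: indicator_def)
  also have "\<dots> = (\<integral>w. eta2 eta K (fst w) (snd w) * 1 \<partial>(mu \<Otimes>\<^sub>M mu))"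
    by (rule GI[where B=1]) auto
  also have "\<dots> = (\<integral>w. (\<Sum>k\<in>{1..K}. eta k (fst w) * eta k (snd w)) \<partial>(mu \<Otimes>\<^sub>M mu))"
    by (simp add: eta2_def)
  also have "\<dots> = (\<Sum>k\<in>{1..K}. \<integral>w. eta k (fst w) * eta k (snd w) \<partial>(mu \<Otimes>\<^sub>M mu))"
    by (rule Bochner_Integration.integral_sum) (rule eta_prod_int)
  also have "\<dots> = (\<Sum>k\<in>{1..K}. (pk D k)\<^sup>2)"
  proof (rule sum.cong[OF refl])
    fix k assume k: "k \<in> {1..K}"
    have "(\<integral>w. eta k (fst w) * eta k (snd w) \<partial>(mu \<Otimes>\<^sub>M mu))
        = (\<integral>x. (\<integral>y. eta k x * eta k y \<partial>mu) \<partial>mu)"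
      using pp.integral_fst[of "\<lambda>x y. eta k x * eta k y"] eta_prod_int[OF k]
      by (simp add: case_prod_beta')
    also have "\<dots> = (\<integral>x. eta k x * pk D k \<partial>mu)" by (simp add: int_eta[OF k])
    also have "\<dots> = (pk D k)\<^sup>2" by (simp add: int_eta[OF k] power2_eq_square)
    finally show "(\<integral>w. eta k (fst w) * eta k (snd w) \<partial>(mu \<Otimes>\<^sub>M mu)) = (pk D k)\<^sup>2" .
  qed
  finally show ?thesis by (simp add: pcoef_def)
qed

lemma P_notsame: "measure (D \<Otimes>\<^sub>M D) {w \<in> space (D \<Otimes>\<^sub>M D). \<not> same_label w} = 1 - pcoef D K"
proof -
  interpret DD: prob_space "D \<Otimes>\<^sub>M D" by (rule prob_D)
  have "{w \<in> space (D \<Otimes>\<^sub>M D). \<not> same_label w} = space (D \<Otimes>\<^sub>M D) - {w \<in> space (D \<Otimes>\<^sub>M D). same_label w}"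
    by auto
  then show ?thesis using DD.prob_compl[OF meas_sameset] P_same by simp
qed


lemma eta2_meas[measurable]: "(\<lambda>w. eta2 eta K (fst w) (snd w)) \<in> borel_measurable (MX \<Otimes>\<^sub>M MX)"
  unfolding eta2_def by (intro borel_measurable_sum) (auto intro!: borel_measurable_times)

lemma Ss_meas[measurable]: "(\<lambda>w. Sstar eta K Q (fst w) (snd w)) \<in> borel_measurable (MX \<Otimes>\<^sub>M MX)"
  unfolding Sstar_def by measurable

lemma int_bdd:
  fixes h :: "'a \<Rightarrow> 'a \<Rightarrow> real"
  assumes hm: "(\<lambda>w. h (fst w) (snd w)) \<in> borel_measurable (MX \<Otimes>\<^sub>M MX)"
    and hb: "\<forall>x\<in>space MX. \<forall>y\<in>space MX. \<bar>h x y\<bar> \<le> B"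
  shows "integrable (mu \<Otimes>\<^sub>M mu) (\<lambda>w. h (fst w) (snd w))"
proof -
  interpret mu: prob_space mu by (rule mu_prob)
  interpret pp: pair_prob_space mu mu ..
  show ?thesis
    by (rule pp.P.integrable_const_bound[where B=B]) (use hb meas_mumu[OF hm] in \<open>auto intro!: AE_I2\<close>)
qed

lemma int_bdd_D:
  fixes h :: "'a \<Rightarrow> 'a \<Rightarrow> real"
  assumes hm: "(\<lambda>w. h (fst w) (snd w)) \<in> borel_measurable (MX \<Otimes>\<^sub>M MX)"
    and hb: "\<forall>x\<in>space MX. \<forall>y\<in>space MX. \<bar>h x y\<bar> \<le> B"
  shows "integrable (D \<Otimes>\<^sub>M D) (\<lambda>w. h (fst (fst w)) (fst (snd w)))"
proof -
  interpret DD: prob_space "D \<Otimes>\<^sub>M D" by (rule prob_D)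
  show ?thesis
    by (rule DD.integrable_const_bound[where B=B])
       (use hb meas_h2[OF hm] in \<open>auto intro!: AE_I2 simp: space_pair_measure space_D\<close>)
qed

lemma int_eta2:
  fixes h :: "'a \<Rightarrow> 'a \<Rightarrow> real"
  assumes hm: "(\<lambda>w. h (fst w) (snd w)) \<in> borel_measurable (MX \<Otimes>\<^sub>M MX)"
    and hb: "\<forall>x\<in>space MX. \<forall>y\<in>space MX. \<bar>h x y\<bar> \<le> B"
  shows "integrable (mu \<Otimes>\<^sub>M mu) (\<lambda>w. eta2 eta K (fst w) (snd w) * h (fst w) (snd w))"
  unfolding eta2_def sum_distrib_right
  by (rule Bochner_Integration.integrable_sum) (rule int_bounded_eta[OF _ hm hb])

lemma Rplus_eq:
  fixes h :: "'a \<Rightarrow> 'a \<Rightarrow> real"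
  assumes hm: "(\<lambda>w. h (fst w) (snd w)) \<in> borel_measurable (MX \<Otimes>\<^sub>M MX)"
    and hb: "\<forall>x\<in>space MX. \<forall>y\<in>space MX. \<bar>h x y\<bar> \<le> B"
  shows "Rplus D h = (\<integral>w. eta2 eta K (fst w) (snd w) * h (fst w) (snd w) \<partial>(mu \<Otimes>\<^sub>M mu)) / pcoef D K"
  unfolding Rplus_def GI[OF hm hb] P_same ..

lemma Rminus_eq:
  fixes h :: "'a \<Rightarrow> 'a \<Rightarrow> real"
  assumes hm: "(\<lambda>w. h (fst w) (snd w)) \<in> borel_measurable (MX \<Otimes>\<^sub>M MX)"
    and hb: "\<forall>x\<in>space MX. \<forall>y\<in>space MX. \<bar>h x y\<bar> \<le> B"
  shows "Rminus D h = ((\<integral>w. h (fst w) (snd w) \<partial>(mu \<Otimes>\<^sub>M mu))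
     - (\<integral>w. eta2 eta K (fst w) (snd w) * h (fst w) (snd w) \<partial>(mu \<Otimes>\<^sub>M mu))) / (1 - pcoef D K)"
proof -
  have i1: "integrable (D \<Otimes>\<^sub>M D) (\<lambda>w. h (fst (fst w)) (fst (snd w)))" by (rule int_bdd_D[OF hm hb])
  have i2: "integrable (D \<Otimes>\<^sub>M D) (\<lambda>w. if same_label w then h (fst (fst w)) (fst (snd w)) else 0)"
  proof -
    interpret DD: prob_space "D \<Otimes>\<^sub>M D" by (rule prob_D)
    have [measurable]: "(\<lambda>w. h (fst (fst w)) (fst (snd w))) \<in> borel_measurable (D \<Otimes>\<^sub>M D)"
      by (rule meas_h2[OF hm])
    have "(\<lambda>w. if same_label w then h (fst (fst w)) (fst (snd w)) else 0) \<in> borel_measurable (D \<Otimes>\<^sub>M D)"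
      by measurable
    then show ?thesis
      by (intro DD.integrable_const_bound[where B="\<bar>B\<bar>"])
         (use hb in \<open>fastforce intro!: AE_I2 simp: space_pair_measure space_D\<close>)
  qed
  have "(\<integral>w. (if same_label w then 0 else h (fst (fst w)) (fst (snd w))) \<partial>(D \<Otimes>\<^sub>M D))
      = (\<integral>w. h (fst (fst w)) (fst (snd w)) - (if same_label w then h (fst (fst w)) (fst (snd w)) else 0) \<partial>(D \<Otimes>\<^sub>M D))"
    by (rule Bochner_Integration.integral_cong) auto
  also have "\<dots> = (\<integral>w. h (fst (fst w)) (fst (snd w)) \<partial>(D \<Otimes>\<^sub>M D))
      - (\<integral>w. (if same_label w then h (fst (fst w)) (fst (snd w)) else 0) \<partial>(D \<Otimes>\<^sub>M D))"
    by (rule Bochner_Integration.integral_diff[OF i1 i2])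
  finally show ?thesis unfolding Rminus_def P_notsame GT[OF hm] GI[OF hm hb] by simp
qed


lemma Bracket:
  fixes S :: "'a \<Rightarrow> 'a \<Rightarrow> real" and Q :: real
  assumes Sm: "(\<lambda>(x, y). S x y) \<in> borel_measurable (MX \<Otimes>\<^sub>M MX)"
    and Sr: "\<forall>x\<in>space MX. \<forall>y\<in>space MX. 0 \<le> S x y \<and> S x y \<le> 1"
    and p: "0 < pcoef D K" "pcoef D K < 1"
  shows "(1 - Q) * pcoef D K * (Rplus D (Sstar eta K Q) - Rplus D S)
        + (1 - pcoef D K) * Q * (Rminus D S - Rminus D (Sstar eta K Q))
       = (\<integral>w. \<bar>S (fst w) (snd w) - Sstar eta K Q (fst w) (snd w)\<bar> * \<bar>eta2 eta K (fst w) (snd w) - Q\<bar> \<partial>(mu \<Otimes>\<^sub>M mu))"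
proof -
  let ?Ss = "Sstar eta K Q"
  let ?M = "mu \<Otimes>\<^sub>M mu"
  let ?e = "\<lambda>w. eta2 eta K (fst w) (snd w)"
  have Sm'[measurable]: "(\<lambda>w. S (fst w) (snd w)) \<in> borel_measurable (MX \<Otimes>\<^sub>M MX)"
    using Sm by (simp add: case_prod_beta')
  have Sb: "\<forall>x\<in>space MX. \<forall>y\<in>space MX. \<bar>S x y\<bar> \<le> 1" using Sr by auto
  have Ssb: "\<forall>x\<in>space MX. \<forall>y\<in>space MX. \<bar>?Ss x y\<bar> \<le> 1" by (auto simp: Sstar_def)
  define IpS where "IpS = (\<integral>w. ?e w * S (fst w) (snd w) \<partial>?M)"
  define IpSs where "IpSs = (\<integral>w. ?e w * ?Ss (fst w) (snd w) \<partial>?M)"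
  define TS where "TS = (\<integral>w. S (fst w) (snd w) \<partial>?M)"
  define TSs where "TSs = (\<integral>w. ?Ss (fst w) (snd w) \<partial>?M)"
  have i1: "integrable ?M (\<lambda>w. ?e w * S (fst w) (snd w))" by (rule int_eta2[OF Sm' Sb])
  have i2: "integrable ?M (\<lambda>w. ?e w * ?Ss (fst w) (snd w))" by (rule int_eta2[OF Ss_meas Ssb])
  have i3: "integrable ?M (\<lambda>w. S (fst w) (snd w))" by (rule int_bdd[OF Sm' Sb])
  have i4: "integrable ?M (\<lambda>w. ?Ss (fst w) (snd w))" by (rule int_bdd[OF Ss_meas Ssb])
  have "(\<integral>w. \<bar>S (fst w) (snd w) - ?Ss (fst w) (snd w)\<bar> * \<bar>?e w - Q\<bar> \<partial>?M)
      = (\<integral>w. ((?e w * ?Ss (fst w) (snd w) - ?e w * S (fst w) (snd w))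
              - Q * ?Ss (fst w) (snd w)) + Q * S (fst w) (snd w) \<partial>?M)"
  proof (rule Bochner_Integration.integral_cong[OF refl])
    fix w assume "w \<in> space ?M"
    then have "0 \<le> S (fst w) (snd w)" "S (fst w) (snd w) \<le> 1" using Sr by auto
    then show "\<bar>S (fst w) (snd w) - ?Ss (fst w) (snd w)\<bar> * \<bar>?e w - Q\<bar>
      = ((?e w * ?Ss (fst w) (snd w) - ?e w * S (fst w) (snd w))
              - Q * ?Ss (fst w) (snd w)) + Q * S (fst w) (snd w)"
      by (cases "Q \<le> ?e w") (auto simp: Sstar_def abs_if algebra_simps)
  qed
  also have "\<dots> = ((IpSs - IpS) - Q * TSs) + Q * TS"
    unfolding IpS_def IpSs_def TS_def TSs_def
    using i1 i2 i3 i4 by simp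
  finally have R: "(\<integral>w. \<bar>S (fst w) (snd w) - ?Ss (fst w) (snd w)\<bar> * \<bar>?e w - Q\<bar> \<partial>?M)
     = ((IpSs - IpS) - Q * TSs) + Q * TS" .
  have e1: "Rplus D S = IpS / pcoef D K" unfolding IpS_def by (rule Rplus_eq[OF Sm' Sb])
  have e2: "Rplus D ?Ss = IpSs / pcoef D K" unfolding IpSs_def by (rule Rplus_eq[OF Ss_meas Ssb])
  have e3: "Rminus D S = (TS - IpS) / (1 - pcoef D K)" unfolding IpS_def TS_def by (rule Rminus_eq[OF Sm' Sb])
  have e4: "Rminus D ?Ss = (TSs - IpSs) / (1 - pcoef D K)" unfolding IpSs_def TSs_def by (rule Rminus_eq[OF Ss_meas Ssb])
  have p1: "pcoef D K \<noteq> 0" "1 - pcoef D K \<noteq> 0" using p by auto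
  have a1: "(1 - Q) * pcoef D K * (IpSs / pcoef D K - IpS / pcoef D K) = (1 - Q) * (IpSs - IpS)"
    using p1 by (simp add: diff_divide_distrib[symmetric])
  have a2: "(1 - pcoef D K) * Q * ((TS - IpS) / (1 - pcoef D K) - (TSs - IpSs) / (1 - pcoef D K))
     = Q * ((TS - IpS) - (TSs - IpSs))"
    using p1 by (simp add: diff_divide_distrib[symmetric])
  show ?thesis unfolding R e1 e2 e3 e4 a1 a2 by (simp add: algebra_simps)
qed

end



lemma tangent_powr:
  fixes x m a :: real
  assumes "0 \<le> x" "0 < m" "0 < a" "a \<le> 1"
  shows "x powr a * m powr (1 - a) \<le> a * x + (1 - a) * m"
proof (cases "x = 0")
  case True then show ?thesis using assms by simp
next
  case False
  then have "x > 0" using assms by simp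
  then show ?thesis using Youngs_inequality_0[of a "1 - a" x m] assms by simp
qed

lemma powr_le_1_plus: "0 \<le> (x::real) \<Longrightarrow> 0 < a \<Longrightarrow> a \<le> 1 \<Longrightarrow> x powr a \<le> 1 + x"
proof (cases "x \<le> 1")
  case True
  assume "0 \<le> x" "0 < a" "a \<le> 1"
  then have "x powr a \<le> 1" using True by (intro powr_le1) auto
  then show ?thesis using \<open>0 \<le> x\<close> by simp
next
  case False
  assume "0 \<le> x" "0 < a" "a \<le> 1"
  then have "x powr a \<le> x powr 1" using False by (intro powr_mono) auto
  then show ?thesis using False by simp
qed

lemma jensen_powr:
  fixes g :: "'b \<Rightarrow> real"
  assumes M: "prob_space M" and gi: "integrable M g" and g0: "\<forall>x\<in>space M. 0 \<le> g x"
    and a: "0 < a" "a \<le> 1"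
  shows "integrable M (\<lambda>x. g x powr a)" "(\<integral>x. g x powr a \<partial>M) \<le> (\<integral>x. g x \<partial>M) powr a"
proof -
  interpret prob_space M by (rule M)
  have gm[measurable]: "g \<in> borel_measurable M" using gi by auto
  show int: "integrable M (\<lambda>x. g x powr a)"
  proof (rule Bochner_Integration.integrable_bound[where f="\<lambda>x. 1 + g x"])
    show "integrable M (\<lambda>x. 1 + g x)" using gi by simp
    show "(\<lambda>x. g x powr a) \<in> borel_measurable M" by measurable
    show "AE x in M. norm (g x powr a) \<le> norm (1 + g x)"
      using g0 a by (auto intro!: AE_I2 powr_le_1_plus)
  qed
  define m where "m = (\<integral>x. g x \<partial>M)"
  have m0: "0 \<le> m" unfolding m_def using g0 by (auto intro!: integral_nonneg_AE AE_I2)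
  show "(\<integral>x. g x powr a \<partial>M) \<le> (\<integral>x. g x \<partial>M) powr a"
  proof (cases "m = 0")
    case True
    then have "AE x in M. g x = 0"
      using integral_nonneg_eq_0_iff_AE[OF gi] g0 unfolding m_def by (auto intro!: AE_I2)
    then have "AE x in M. g x powr a = 0" by eventually_elim simp
    then have "(\<integral>x. g x powr a \<partial>M) = 0" by (simp add: integral_eq_zero_AE)
    then show ?thesis using True m_def by simp
  next
    case False
    then have mp: "0 < m" using m0 by simp
    have "(\<integral>x. g x powr a * m powr (1 - a) \<partial>M) \<le> (\<integral>x. a * g x + (1 - a) * m \<partial>M)"
      using int gi g0 a mp by (intro integral_mono) (auto intro!: tangent_powr)
    also have "\<dots> = m" using gi by (simp add: m_def algebra_simps prob_space)
    finally have "(\<integral>x. g x powr a \<partial>M) * m powr (1 - a) \<le> m" by simp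
    then have "(\<integral>x. g x powr a \<partial>M) \<le> m / m powr (1 - a)"
      using mp by (simp add: pos_le_divide_eq)
    also have "\<dots> = m powr a" using mp by (simp add: powr_diff)
    finally show ?thesis unfolding m_def .
  qed
qed


lemma amgm_aux:
  fixes s y :: real
  assumes "0 \<le> s" "0 < y"
  shows "2 * s \<le> y * s + s / y"
proof -
  have "2 * y \<le> y * y + 1" using sum_squares_ge_zero[of "y - 1" 0] by (simp add: algebra_simps power2_eq_square) 
  then have "2 \<le> y + 1 / y" using assms by (simp add: field_simps)
  then have "s * 2 \<le> s * (y + 1 / y)" using assms by (intro mult_left_mono) auto
  then show ?thesis by (simp add: algebra_simps)
qed

lemma inner_ineq:
  fixes s t :: "'b \<Rightarrow> real" and c a :: real
  assumes M: "prob_space M"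
    and sm[measurable]: "s \<in> borel_measurable M" and tm[measurable]: "t \<in> borel_measurable M"
    and s01: "\<forall>x\<in>space M. 0 \<le> s x \<and> s x \<le> 1" and t0: "\<forall>x\<in>space M. 0 \<le> t x"
    and ti: "integrable M t" and a: "0 < a" "a \<le> 1"
    and N: "(\<integral>\<^sup>+x. (if t x = 0 then \<infinity> else ennreal (t x powr (- a))) \<partial>M) \<le> ennreal c"
  shows "0 < c \<and> (\<integral>x. s x \<partial>M)\<^sup>2 \<le> c * (\<integral>x. s x * t x \<partial>M) powr a"
proof -
  interpret prob_space M by (rule M)
  define f where "f x = (if t x = 0 then \<infinity> else ennreal (t x powr (- a)))" for x
  have fm[measurable]: "f \<in> borel_measurable M" unfolding f_def by measurable
  have Nf: "integral\<^sup>N M f \<le> ennreal c" using N unfolding f_def .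
  have c0: "0 < c"
  proof (rule ccontr)
    assume "\<not> 0 < c"
    then have "ennreal c = 0" by (simp add: ennreal_eq_0_iff)
    then have "integral\<^sup>N M f = 0" using Nf by simp
    then have "AE x in M. f x = 0" using nn_integral_0_iff_AE[OF fm] by simp
    moreover have "AE x in M. f x \<noteq> 0"
    proof (rule AE_I2)
      fix x assume "x \<in> space M"
      then have "0 \<le> t x" using t0 by auto
      then show "f x \<noteq> 0" by (auto simp: f_def)
    qed
    ultimately have "AE x in M. False" by eventually_elim simp
    then show False by simp
  qed
  have fin: "integral\<^sup>N M f \<noteq> \<infinity>" using Nf by (auto simp: top_unique)
  have tpos: "AE x in M. 0 < t x"
  proof -
    have "AE x in M. f x \<noteq> \<infinity>" by (rule nn_integral_PInf_AE[OF fm fin])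
    moreover have "AE x in M. x \<in> space M" by (rule AE_space)
    ultimately show ?thesis
    proof eventually_elim
      case (elim x)
      then have "t x \<noteq> 0" by (auto simp: f_def split: if_splits)
      then show ?case using t0 elim by force
    qed
  qed
  define w where "w x = s x * t x powr (- a)" for x
  have wm[measurable]: "w \<in> borel_measurable M" unfolding w_def by measurable
  have w0: "\<forall>x\<in>space M. 0 \<le> w x" using s01 t0 by (auto simp: w_def)
  have wf: "\<forall>x\<in>space M. ennreal (w x) \<le> f x"
  proof
    fix x assume x: "x \<in> space M"
    show "ennreal (w x) \<le> f x"
    proof (cases "t x = 0")
      case False
      have "w x \<le> t x powr (- a)" using s01 x by (auto simp: w_def intro!: mult_left_le_one_le)
      then show ?thesis using False by (simp add: f_def)
    qed (simp add: f_def)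
  qed
  have Nw: "(\<integral>\<^sup>+x. ennreal (w x) \<partial>M) \<le> ennreal c"
    using nn_integral_mono[of M "\<lambda>x. ennreal (w x)" f] wf Nf by (auto intro: order_trans)
  have wi: "integrable M w"
    by (rule integrableI_nonneg) (use w0 Nw in \<open>auto intro!: AE_I2 simp: less_top[symmetric] top_unique\<close>)
  have Wc: "(\<integral>x. w x \<partial>M) \<le> c"
  proof -
    have "ennreal (\<integral>x. w x \<partial>M) = (\<integral>\<^sup>+x. ennreal (w x) \<partial>M)"
      by (rule nn_integral_eq_integral[symmetric]) (use wi w0 in \<open>auto intro!: AE_I2\<close>)
    then have "ennreal (\<integral>x. w x \<partial>M) \<le> ennreal c" using Nw by simp
    then show ?thesis using c0 by (simp add: ennreal_le_iff)
  qed
  define u where "u x = s x * t x powr a" for x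
  have um[measurable]: "u \<in> borel_measurable M" unfolding u_def by measurable
  have ui: "integrable M u"
  proof (rule Bochner_Integration.integrable_bound[where f="\<lambda>x. 1 + t x"])
    show "integrable M (\<lambda>x. 1 + t x)" using ti by simp
    show "AE x in M. norm (u x) \<le> norm (1 + t x)"
    proof (rule AE_I2)
      fix x assume x: "x \<in> space M"
      have "u x \<le> t x powr a" using s01 x by (auto simp: u_def intro!: mult_left_le_one_le)
      also have "\<dots> \<le> 1 + t x" using powr_le_1_plus[of "t x" a] t0 x a by auto
      finally show "norm (u x) \<le> norm (1 + t x)" using s01 t0 x by (auto simp: u_def)
    qed
  qed simp
  define A where "A = (\<integral>x. u x \<partial>M)"
  have A0: "0 \<le> A" unfolding A_def using s01 by (auto intro!: integral_nonneg_AE AE_I2 simp: u_def)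
  have si: "integrable M s"
    by (rule integrable_const_bound[where B=1]) (use s01 in \<open>auto intro!: AE_I2\<close>)
  define \<sigma> where "\<sigma> = (\<integral>x. s x \<partial>M)"
  have s0: "0 \<le> \<sigma>" unfolding \<sigma>_def using s01 by (auto intro!: integral_nonneg_AE AE_I2)
  have key: "2 * \<sigma> \<le> lam * A + c / lam" if l: "0 < lam" for lam
  proof -
    have "(\<integral>x. 2 * s x \<partial>M) \<le> (\<integral>x. lam * u x + w x / lam \<partial>M)"
    proof (rule integral_mono_AE)
      show "integrable M (\<lambda>x. 2 * s x)" using si by simp
      show "integrable M (\<lambda>x. lam * u x + w x / lam)" using ui wi by simp
      show "AE x in M. 2 * s x \<le> lam * u x + w x / lam"
        using tpos AE_space
      proof eventually_elim
        case (elim x)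
        have "2 * s x \<le> (lam * t x powr a) * s x + s x / (lam * t x powr a)"
          using amgm_aux[of "s x" "lam * t x powr a"] elim l s01 by auto
        then show ?case using elim by (simp add: u_def w_def powr_minus divide_inverse mult_ac)
      qed
    qed
    then have "2 * \<sigma> \<le> lam * A + (\<integral>x. w x \<partial>M) / lam"
      using ui wi by (simp add: \<sigma>_def A_def)
    also have "\<dots> \<le> lam * A + c / lam" using Wc l by (simp add: divide_right_mono)
    finally show ?thesis .
  qed
  have sq: "\<sigma>\<^sup>2 \<le> c * A"
  proof (cases "A = 0")
    case True
    have "\<sigma> = 0"
    proof (rule ccontr)
      assume "\<sigma> \<noteq> 0"
      then have "0 < \<sigma>" using s0 by simp
      then have "2 * \<sigma> \<le> c / (c / \<sigma>)" using key[of "c / \<sigma>"] True c0 by simp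
      then show False using \<open>0 < \<sigma>\<close> c0 by simp
    qed
    then show ?thesis using True by simp
  next
    case False
    then have Ap: "0 < A" using A0 by simp
    define l where "l = sqrt (c / A)"
    have lp: "0 < l" using Ap c0 by (simp add: l_def)
    have l2: "l\<^sup>2 = c / A" using Ap c0 by (simp add: l_def)
    have e1: "l * A = sqrt (c * A)"
    proof (rule real_sqrt_unique[symmetric])
      have "(l * A)\<^sup>2 = l\<^sup>2 * A * A" by (simp add: power2_eq_square)
      then show "(l * A)\<^sup>2 = c * A" using l2 Ap by simp
      show "0 \<le> l * A" using lp Ap by simp
    qed
    have e2: "c / l = sqrt (c * A)"
    proof (rule real_sqrt_unique[symmetric])
      show "(c / l)\<^sup>2 = c * A" using l2 Ap c0 by (simp add: power_divide power2_eq_square)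
      show "0 \<le> c / l" using lp c0 by simp
    qed
    have "2 * \<sigma> \<le> 2 * sqrt (c * A)" using key[OF lp] e1 e2 by simp
    then have "\<sigma> \<le> sqrt (c * A)" by simp
    then have "\<sigma>\<^sup>2 \<le> (sqrt (c * A))\<^sup>2" using s0 by (intro power_mono) auto
    then show ?thesis using Ap c0 by simp
  qed
  have sti: "integrable M (\<lambda>x. s x * t x)"
  proof (rule Bochner_Integration.integrable_bound[where f="t"])
    show "AE x in M. norm (s x * t x) \<le> norm (t x)"
      using s01 t0 by (auto intro!: AE_I2 mult_left_le_one_le simp: abs_mult)
  qed (use ti in auto)
  have st0: "\<forall>x\<in>space M. 0 \<le> s x * t x" using s01 t0 by auto
  have "A \<le> (\<integral>x. (s x * t x) powr a \<partial>M)"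
    unfolding A_def
  proof (rule integral_mono[OF ui jensen_powr(1)[OF M sti st0 a]])
    fix x assume x: "x \<in> space M"
    have "s x = s x powr 1" using s01 x by simp
    also have "\<dots> \<le> s x powr a" using s01 x a by (intro powr_mono') auto
    finally have "s x * t x powr a \<le> s x powr a * t x powr a"
      using t0 x by (intro mult_right_mono) auto
    then show "u x \<le> (s x * t x) powr a" using s01 t0 x by (simp add: u_def powr_mult)
  qed
  also have "\<dots> \<le> (\<integral>x. s x * t x \<partial>M) powr a"
    by (rule jensen_powr(2)[OF M sti st0 a])
  finally have "c * A \<le> c * (\<integral>x. s x * t x \<partial>M) powr a" using c0 by (intro mult_left_mono) auto
  then show ?thesis using sq c0 unfolding \<sigma>_def by linarith
qed




context L3
begin

lemma meas_swap_slice: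
  fixes h :: "'a \<Rightarrow> 'a \<Rightarrow> real"
  assumes hm: "(\<lambda>w. h (fst w) (snd w)) \<in> borel_measurable (MX \<Otimes>\<^sub>M MX)"
  shows "(\<lambda>(x0, x). h x x0) \<in> borel_measurable (MX \<Otimes>\<^sub>M mu)"
proof -
  have "(\<lambda>w. (snd w, fst w)) \<in> measurable (MX \<Otimes>\<^sub>M mu) (MX \<Otimes>\<^sub>M MX)"
    by measurable
  from measurable_compose[OF this hm] show ?thesis by (simp add: case_prod_beta' o_def)
qed

lemma meas_slice1:
  fixes h :: "'a \<Rightarrow> 'a \<Rightarrow> real"
  assumes hm: "(\<lambda>w. h (fst w) (snd w)) \<in> borel_measurable (MX \<Otimes>\<^sub>M MX)" and x0: "x0 \<in> space MX"
  shows "(\<lambda>x. h x x0) \<in> borel_measurable MX"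
proof -
  have "(\<lambda>x. (x, x0)) \<in> measurable MX (MX \<Otimes>\<^sub>M MX)" using x0 by measurable
  from measurable_compose[OF this hm] show ?thesis by (simp add: o_def)
qed

lemma V:
  fixes S :: "'a \<Rightarrow> 'a \<Rightarrow> real" and Q :: real
  assumes Sm: "(\<lambda>(x, y). S x y) \<in> borel_measurable (MX \<Otimes>\<^sub>M MX)"
    and Sr: "\<forall>x\<in>space MX. \<forall>y\<in>space MX. 0 \<le> S x y \<and> S x y \<le> 1"
  defines "Ss \<equiv> Sstar eta K Q"
  defines "G \<equiv> (\<lambda>x0. \<integral>x. \<bar>S x x0 - Ss x x0\<bar> \<partial>mu)"
  shows "(\<integral>z. (qS D S Ss z - (\<integral>z'. qS D S Ss z' \<partial>D))\<^sup>2 \<partial>D) \<le> (\<integral>x0. (G x0)\<^sup>2 \<partial>mu)"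
    "G \<in> borel_measurable MX" "\<forall>x0\<in>space MX. 0 \<le> G x0 \<and> G x0 \<le> 1"
proof -
  interpret Dp: prob_space D by (rule D_prob)
  interpret mu: prob_space mu by (rule mu_prob)
  define f where "f x y = S x y - Ss x y" for x y
  have fm[measurable]: "(\<lambda>w. f (fst w) (snd w)) \<in> borel_measurable (MX \<Otimes>\<^sub>M MX)"
    using Sm unfolding f_def Ss_def by (simp add: case_prod_beta')
  have fb: "\<forall>x\<in>space MX. \<forall>y\<in>space MX. \<bar>f x y\<bar> \<le> 1"
    using Sr by (auto simp: f_def Ss_def Sstar_def)
  have Gdef: "G x0 = (\<integral>x. \<bar>f x x0\<bar> \<partial>mu)" for x0 by (simp add: G_def f_def)
  show Gm: "G \<in> borel_measurable MX"
  proof -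
    have "(\<lambda>(x0, x). \<bar>f x x0\<bar>) \<in> borel_measurable (MX \<Otimes>\<^sub>M mu)"
      using meas_swap_slice[OF fm] by (simp add: case_prod_beta' borel_measurable_abs)
    then have "(\<lambda>x0. \<integral>x. \<bar>f x x0\<bar> \<partial>mu) \<in> borel_measurable MX"
      by (rule mu.borel_measurable_lebesgue_integral)
    then show ?thesis unfolding Gdef .
  qed
  show Gb: "\<forall>x0\<in>space MX. 0 \<le> G x0 \<and> G x0 \<le> 1"
  proof
    fix x0 assume x0: "x0 \<in> space MX"
    have "(\<integral>x. \<bar>f x x0\<bar> \<partial>mu) \<le> (\<integral>x. 1 \<partial>mu)"
      by (rule integral_mono) (use fb x0 meas_slice1[OF fm x0] in \<open>auto intro!: mu.integrable_const_bound[where B=1] AE_I2\<close>)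
    moreover have "0 \<le> (\<integral>x. \<bar>f x x0\<bar> \<partial>mu)" by simp
    moreover have "measure mu (space MX) = 1" using mu.prob_space by simp
    ultimately show "0 \<le> G x0 \<and> G x0 \<le> 1" unfolding Gdef by simp
  qed
  define C where "C = (\<integral>w. (if same_label w then 1 else 0) *
              (S (fst (fst w)) (fst (snd w)) - Ss (fst (fst w)) (fst (snd w))) \<partial>(D \<Otimes>\<^sub>M D))"
  define g where "g z' = (\<integral>z. (if snd z = snd z' then 1 else 0) * f (fst z) (fst z') \<partial>D)" for z'
  have fD[measurable]: "(\<lambda>w. f (fst (fst w)) (fst (snd w))) \<in> borel_measurable (D \<Otimes>\<^sub>M D)"
    by (rule meas_h2[OF fm])
  have intz: "integrable D (\<lambda>z. (if snd z = snd z' then 1 else 0) * f (fst z) (fst z'))"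
    if z': "z' \<in> space D" for z'
  proof -
    have x0: "fst z' \<in> space MX" using z' by (auto simp: space_D)
    have [measurable]: "(\<lambda>x. f x (fst z')) \<in> borel_measurable MX" by (rule meas_slice1[OF fm x0])
    show ?thesis
      by (rule Dp.integrable_const_bound[where B=1]) (use fb x0 in \<open>auto intro!: AE_I2 simp: space_D\<close>)
  qed
  have q_eq: "qS D S Ss z' = g z' - C" if z': "z' \<in> space D" for z'
  proof -
    have "qS D S Ss z' = (\<integral>z. (if snd z = snd z' then 1 else 0) * f (fst z) (fst z') - C \<partial>D)"
      unfolding qS_def QS_def C_def f_def same_label_def by simp
    also have "\<dots> = g z' - C" using intz[OF z'] by (simp add: g_def Dp.prob_space)
    finally show ?thesis .
  qed
  have gm[measurable]: "g \<in> borel_measurable D"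
  proof -
    have "(\<lambda>w. (if same_label w then 1 else 0) * f (fst (snd w)) (fst (fst w))) \<in> borel_measurable (D \<Otimes>\<^sub>M D)"
    proof -
      have "(\<lambda>w. (snd w, fst w)) \<in> measurable (D \<Otimes>\<^sub>M D) (D \<Otimes>\<^sub>M D)" by measurable
      from measurable_compose[OF this fD] have [measurable]: "(\<lambda>w. f (fst (snd w)) (fst (fst w))) \<in> borel_measurable (D \<Otimes>\<^sub>M D)"
        by (simp add: o_def)
      show ?thesis by measurable
    qed
    then have "(\<lambda>(z', z). (if snd z = snd z' then 1 else 0) * f (fst z) (fst z')) \<in> borel_measurable (D \<Otimes>\<^sub>M D)"
      by (simp add: case_prod_beta' same_label_def eq_commute)
    then have "(\<lambda>z'. \<integral>z. (if snd z = snd z' then 1 else 0) * f (fst z) (fst z') \<partial>D) \<in> borel_measurable D"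
      by (rule Dp.borel_measurable_lebesgue_integral)
    then show ?thesis unfolding g_def .
  qed
  have gb: "\<bar>g z'\<bar> \<le> G (fst z')" if z': "z' \<in> space D" for z'
  proof -
    have x0: "fst z' \<in> space MX" using z' by (auto simp: space_D)
    have [measurable]: "(\<lambda>x. f x (fst z')) \<in> borel_measurable MX" by (rule meas_slice1[OF fm x0])
    have "\<bar>g z'\<bar> \<le> (\<integral>z. norm ((if snd z = snd z' then 1 else 0) * f (fst z) (fst z')) \<partial>D)"
    proof -
      have "norm (g z') \<le> (\<integral>z. norm ((if snd z = snd z' then 1 else 0) * f (fst z) (fst z')) \<partial>D)"
        unfolding g_def by (rule integral_norm_bound)
      then show ?thesis by simp
    qed
    also have "\<dots> \<le> (\<integral>z. \<bar>f (fst z) (fst z')\<bar> \<partial>D)"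
      by (rule integral_mono) (use intz[OF z'] fb x0 in \<open>auto intro!: Dp.integrable_const_bound[where B=1] AE_I2 simp: space_D\<close>)
    also have "\<dots> = G (fst z')" unfolding Gdef mu_def
      by (subst integral_distr) auto
    finally show ?thesis .
  qed
  have gle: "\<bar>g z\<bar> \<le> 1" if z: "z \<in> space D" for z
  proof -
    have "fst z \<in> space MX" using z by (auto simp: space_D)
    then show ?thesis using gb[OF z] Gb by force
  qed
  have gi: "integrable D g"
    by (rule Dp.integrable_const_bound[where B=1]) (auto intro!: AE_I2 gle)
  have g2i: "integrable D (\<lambda>z. (g z)\<^sup>2)"
  proof (rule Dp.integrable_const_bound[where B=1])
    show "AE z in D. norm ((g z)\<^sup>2) \<le> 1"
    proof (rule AE_I2)
      fix z assume z: "z \<in> space D"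
      then have "\<bar>g z\<bar> \<le> 1" by (rule gle)
      then have "\<bar>g z\<bar>\<^sup>2 \<le> 1\<^sup>2" by (intro power_mono) auto
      then show "norm ((g z)\<^sup>2) \<le> 1" by simp
    qed
  qed simp
  have "(\<integral>z. (qS D S Ss z - (\<integral>z'. qS D S Ss z' \<partial>D))\<^sup>2 \<partial>D) = (\<integral>z. (g z - (\<integral>z'. g z' \<partial>D))\<^sup>2 \<partial>D)"
  proof -
    have "(\<integral>z'. qS D S Ss z' \<partial>D) = (\<integral>z'. g z' - C \<partial>D)"
      by (rule Bochner_Integration.integral_cong) (auto simp: q_eq)
    also have "\<dots> = (\<integral>z'. g z' \<partial>D) - C" using gi by (simp add: Dp.prob_space)
    finally have m: "(\<integral>z'. qS D S Ss z' \<partial>D) = (\<integral>z'. g z' \<partial>D) - C" .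
    show ?thesis unfolding m by (rule Bochner_Integration.integral_cong) (auto simp: q_eq)
  qed
  also have "\<dots> = (\<integral>z. (g z)\<^sup>2 \<partial>D) - (\<integral>z'. g z' \<partial>D)\<^sup>2"
  proof -
    define m where "m = (\<integral>z'. g z' \<partial>D)"
    have "(\<integral>z. (g z - m)\<^sup>2 \<partial>D) = (\<integral>z. (g z)\<^sup>2 - 2 * m * g z + m\<^sup>2 \<partial>D)"
      by (rule Bochner_Integration.integral_cong) (auto simp: power2_diff)
    also have "\<dots> = (\<integral>z. (g z)\<^sup>2 \<partial>D) - 2 * m * m + m\<^sup>2"
      using gi g2i by (simp add: Dp.prob_space m_def)
    finally show ?thesis unfolding m_def by (simp add: power2_eq_square)
  qed
  also have "\<dots> \<le> (\<integral>z. (g z)\<^sup>2 \<partial>D)" by simp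
  also have "\<dots> \<le> (\<integral>z. (G (fst z))\<^sup>2 \<partial>D)"
  proof (rule integral_mono[OF g2i])
    show "integrable D (\<lambda>z. (G (fst z))\<^sup>2)"
    proof (rule Dp.integrable_const_bound[where B=1])
      show "AE z in D. norm ((G (fst z))\<^sup>2) \<le> 1"
      proof (rule AE_I2)
        fix z assume z: "z \<in> space D"
        then have "fst z \<in> space MX" by (auto simp: space_D)
        then have "0 \<le> G (fst z)" "G (fst z) \<le> 1" using Gb by auto
        then show "norm ((G (fst z))\<^sup>2) \<le> 1" by (simp add: power_le_one)
      qed
      show "(\<lambda>z. (G (fst z))\<^sup>2) \<in> borel_measurable D" using Gm by measurable
    qed
    fix z assume z: "z \<in> space D"
    have "\<bar>g z\<bar>\<^sup>2 \<le> (G (fst z))\<^sup>2" using gb[OF z] by (intro power_mono) auto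
    then show "(g z)\<^sup>2 \<le> (G (fst z))\<^sup>2" by simp
  qed
  also have "\<dots> = (\<integral>x0. (G x0)\<^sup>2 \<partial>mu)" unfolding mu_def using Gm by (subst integral_distr) auto
  finally show "(\<integral>z. (qS D S Ss z - (\<integral>z'. qS D S Ss z' \<partial>D))\<^sup>2 \<partial>D) \<le> (\<integral>x0. (G x0)\<^sup>2 \<partial>mu)" .
qed

end



theorem lemma3:
  fixes MX :: "'a::euclidean_space measure"
    and D :: "('a \<times> nat) measure"
    and K :: nat
    and eta :: "nat \<Rightarrow> 'a \<Rightarrow> real"
    and \<alpha> \<kappa> c a :: real
    and S0 :: "('a \<Rightarrow> 'a \<Rightarrow> real) set"
    and S :: "'a \<Rightarrow> 'a \<Rightarrow> real"
  assumes MX_borel: "sets MX = sets (restrict_space borel (space MX))"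
    and D_prob: "prob_space D"
    and D_sets: "sets D = sets (MX \<Otimes>\<^sub>M count_space {1..K})"
    and pk_pos: "\<forall>k\<in>{1..K}. pk D k > 0"
    and eta_cond: "cond_prob_version MX D K eta"
    and F_cont: "continuous_on UNIV (cdf_neg D eta K)"
    and F_strict: "strict_mono_on {t. 0 < cdf_neg D eta K t \<and> cdf_neg D eta K t < 1} (cdf_neg D eta K)"
    and alpha: "0 < \<alpha>" "\<alpha> < 1"
    and S0_meas: "\<forall>f\<in>S0. (\<lambda>(x, x'). f x x') \<in> borel_measurable (MX \<Otimes>\<^sub>M MX)"
    and S0_range: "\<forall>f\<in>S0. \<forall>x\<in>space MX. \<forall>x'\<in>space MX. 0 \<le> f x x' \<and> f x x' \<le> 1"
    and S0_VC: "VC_major_on (space MX \<times> space MX) ((\<lambda>f. \<lambda>(x, x'). f x x') ` S0)"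
    and kappa: "0 < \<kappa>" "\<kappa> < 1" "\<kappa> \<le> pcoef D K" "pcoef D K \<le> 1 - \<kappa>"
    and a_range: "0 \<le> a" "a \<le> 1"
    and noise: "AE x in distr D MX fst.
                  (\<integral>\<^sup>+ x'. negpow a (eta2 eta K x x' - Qstar D eta K \<alpha>) \<partial>(distr D MX fst))
                  \<le> ennreal c"
    and Sstar_in: "\<exists>f\<in>S0. \<forall>x\<in>space MX. \<forall>x'\<in>space MX.
                     f x x' = Sstar eta K (Qstar D eta K \<alpha>) x x'"
    and S_in: "S \<in> S0"
  shows "(let Q = Qstar D eta K \<alpha>; Ss = Sstar eta K Q; p = pcoef D K; q = qS D S Ss
          in (\<integral>z. (q z - (\<integral>z'. q z' \<partial>D))\<^sup>2 \<partial>D)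
             \<le> c * pow0 ((1 - Q) * p * (Rplus D Ss - Rplus D S)
                          + (1 - p) * Q * (Rminus D S - Rminus D Ss)) a)"
proof -
  interpret L3 MX D K eta by (rule L3.intro[OF D_prob D_sets eta_cond])
  interpret Dp: prob_space D by (rule D_prob)
  interpret mu: prob_space mu by (rule mu_prob)
  interpret pp: pair_sigma_finite mu mu ..
  define Q where "Q = Qstar D eta K \<alpha>"
  define Ss where "Ss = Sstar eta K Q"
  define p where "p = pcoef D K"
  define G where "G = (\<lambda>x0. \<integral>x. \<bar>S x x0 - Ss x x0\<bar> \<partial>mu)"
  define H where "H = (\<lambda>x0. \<integral>x. \<bar>S x x0 - Ss x x0\<bar> * \<bar>eta2 eta K x x0 - Q\<bar> \<partial>mu)"
  define B where "B = (1 - Q) * p * (Rplus D Ss - Rplus D S) + (1 - p) * Q * (Rminus D S - Rminus D Ss)"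
  have Sm: "(\<lambda>(x, y). S x y) \<in> borel_measurable (MX \<Otimes>\<^sub>M MX)" using S0_meas S_in by auto
  have Sm'[measurable]: "(\<lambda>w. S (fst w) (snd w)) \<in> borel_measurable (MX \<Otimes>\<^sub>M MX)"
    using Sm by (simp add: case_prod_beta')
  have Sr: "\<forall>x\<in>space MX. \<forall>y\<in>space MX. 0 \<le> S x y \<and> S x y \<le> 1" using S0_range S_in by auto
  note VV = V[OF Sm Sr, of Q, folded Ss_def]
  have Var: "(\<integral>z. (qS D S Ss z - (\<integral>z'. qS D S Ss z' \<partial>D))\<^sup>2 \<partial>D) \<le> (\<integral>x0. (G x0)\<^sup>2 \<partial>mu)"
    unfolding G_def by (rule VV(1))
  have Gm[measurable]: "G \<in> borel_measurable MX" unfolding G_def by (rule VV(2))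
  have Gb: "\<forall>x0\<in>space MX. 0 \<le> G x0 \<and> G x0 \<le> 1" unfolding G_def by (rule VV(3))
  have G2i: "integrable mu (\<lambda>x0. (G x0)\<^sup>2)"
  proof (rule mu.integrable_const_bound[where B=1])
    show "AE x0 in mu. norm ((G x0)\<^sup>2) \<le> 1"
    proof (rule AE_I2)
      fix x0 assume "x0 \<in> space mu"
      then have "0 \<le> G x0" "G x0 \<le> 1" using Gb by auto
      then show "norm ((G x0)\<^sup>2) \<le> 1" by (simp add: power_le_one)
    qed
  qed simp
  have noise': "AE x in mu. (\<integral>\<^sup>+ x'. negpow a (eta2 eta K x x' - Q) \<partial>mu) \<le> ennreal c"
    unfolding mu_def Q_def by (rule noise)
  have goal: "(\<integral>z. (qS D S Ss z - (\<integral>z'. qS D S Ss z' \<partial>D))\<^sup>2 \<partial>D) \<le> c * pow0 B a"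
  proof (cases "a = 0")
    case True
    have e1: "emeasure mu (space MX) = 1" using mu.emeasure_space_1 by simp
    have "AE x in mu. 1 \<le> ennreal c"
      using noise' by (simp add: True negpow_def e1)
    then have "1 \<le> ennreal c" by (simp add: mu.AE_const)
    then have c1: "1 \<le> c"
      by (metis ennreal_1 ennreal_le_iff2 le_less_linear not_one_le_zero order_less_imp_le)
    have "(\<integral>x0. (G x0)\<^sup>2 \<partial>mu) \<le> (\<integral>x0. 1 \<partial>mu)"
    proof (rule integral_mono[OF G2i])
      fix x0 assume "x0 \<in> space mu"
      then have "0 \<le> G x0" "G x0 \<le> 1" using Gb by auto
      then show "(G x0)\<^sup>2 \<le> 1" by (simp add: power_le_one)
    qed simp
    moreover have "measure mu (space MX) = 1" using mu.prob_space by simp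
    ultimately have "(\<integral>x0. (G x0)\<^sup>2 \<partial>mu) \<le> 1" by simp
    then show ?thesis using Var c1 True by (simp add: pow0_def)
  next
    case False
    then have a0: "0 < a" using a_range by simp
    have e2sym: "eta2 eta K x y = eta2 eta K y x" for x y by (simp add: eta2_def mult.commute)
    have Ssb: "\<forall>x\<in>space MX. \<forall>y\<in>space MX. \<bar>Ss x y\<bar> \<le> 1" by (auto simp: Ss_def Sstar_def)
    have Sb: "\<forall>x\<in>space MX. \<forall>y\<in>space MX. \<bar>S x y\<bar> \<le> 1" using Sr by auto
    have Ssm[measurable]: "(\<lambda>w. Ss (fst w) (snd w)) \<in> borel_measurable (MX \<Otimes>\<^sub>M MX)"
      unfolding Ss_def by (rule Ss_meas)
    have fm[measurable]: "(\<lambda>w. \<bar>S (fst w) (snd w) - Ss (fst w) (snd w)\<bar>) \<in> borel_measurable (MX \<Otimes>\<^sub>M MX)"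
      by measurable
    have tm[measurable]: "(\<lambda>w. \<bar>eta2 eta K (fst w) (snd w) - Q\<bar>) \<in> borel_measurable (MX \<Otimes>\<^sub>M MX)"
      by measurable
    have pt: "AE x0 in mu. 0 < c \<and> (G x0)\<^sup>2 \<le> c * H x0 powr a"
      using noise' AE_space
    proof eventually_elim
      case (elim x0)
      then have x0: "x0 \<in> space MX" by simp
      have tint: "integrable mu (\<lambda>x. \<bar>eta2 eta K x x0 - Q\<bar>)"
      proof -
        have "integrable mu (\<lambda>x. (\<Sum>k\<in>{1..K}. eta k x * eta k x0) - Q)"
          using eta_int by (auto intro!: Bochner_Integration.integrable_sum)
        then show ?thesis by (simp add: eta2_def)
      qed
      have N: "(\<integral>\<^sup>+x. (if \<bar>eta2 eta K x x0 - Q\<bar> = 0 then \<infinity> else ennreal (\<bar>eta2 eta K x x0 - Q\<bar> powr (- a))) \<partial>mu)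
          \<le> ennreal c"
      proof -
        have "(\<integral>\<^sup>+x. (if \<bar>eta2 eta K x x0 - Q\<bar> = 0 then \<infinity> else ennreal (\<bar>eta2 eta K x x0 - Q\<bar> powr (- a))) \<partial>mu)
            = (\<integral>\<^sup>+ x'. negpow a (eta2 eta K x0 x' - Q) \<partial>mu)"
          by (rule nn_integral_cong) (simp add: negpow_def False e2sym)
        then show ?thesis using elim by simp
      qed
      have "0 < c \<and> (\<integral>x. \<bar>S x x0 - Ss x x0\<bar> \<partial>mu)\<^sup>2
            \<le> c * (\<integral>x. \<bar>S x x0 - Ss x x0\<bar> * \<bar>eta2 eta K x x0 - Q\<bar> \<partial>mu) powr a"
      proof (rule inner_ineq[OF mu_prob _ _ _ _ tint a0 _ N])
        show "(\<lambda>x. \<bar>S x x0 - Ss x x0\<bar>) \<in> borel_measurable mu"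
          using meas_slice1[OF fm x0] by simp
        show "(\<lambda>x. \<bar>eta2 eta K x x0 - Q\<bar>) \<in> borel_measurable mu"
          using meas_slice1[OF tm x0] by simp
        show "\<forall>x\<in>space mu. 0 \<le> \<bar>S x x0 - Ss x x0\<bar> \<and> \<bar>S x x0 - Ss x x0\<bar> \<le> 1"
          using Sr x0 by (auto simp: Ss_def Sstar_def)
        show "\<forall>x\<in>space mu. 0 \<le> \<bar>eta2 eta K x x0 - Q\<bar>" by simp
        show "a \<le> 1" using a_range by simp
      qed
      then show ?case by (simp add: G_def H_def)
    qed
    then have "AE x0 in mu. 0 < c" by eventually_elim simp
    then have c0: "0 < c" by (simp add: mu.AE_const)
    define F where "F x x0 = \<bar>S x x0 - Ss x x0\<bar> * \<bar>eta2 eta K x x0 - Q\<bar>" for x x0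
    have Fi: "integrable (mu \<Otimes>\<^sub>M mu) (case_prod F)"
    proof -
      have "integrable (mu \<Otimes>\<^sub>M mu) (\<lambda>w. \<bar>(eta2 eta K (fst w) (snd w) * S (fst w) (snd w)
             - eta2 eta K (fst w) (snd w) * Ss (fst w) (snd w)) - Q * S (fst w) (snd w) + Q * Ss (fst w) (snd w)\<bar>)"
        using int_eta2[OF Sm' Sb] int_eta2[OF Ssm Ssb] int_bdd[OF Sm' Sb] int_bdd[OF Ssm Ssb] by auto
      then show ?thesis
        by (rule Bochner_Integration.integrable_cong[THEN iffD1, rotated -1])
           (auto simp: F_def abs_mult[symmetric] algebra_simps)
    qed
    have Hi: "integrable mu H" and HI: "(\<integral>x0. H x0 \<partial>mu) = (\<integral>w. case_prod F w \<partial>(mu \<Otimes>\<^sub>M mu))"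
      using pp.integrable_snd[OF Fi] pp.integral_snd[OF Fi] by (simp_all add: H_def F_def)
    have H0: "\<forall>x0\<in>space mu. 0 \<le> H x0" by (auto simp: H_def intro!: integral_nonneg_AE AE_I2)
    have pc: "0 < pcoef D K" "pcoef D K < 1" using kappa by auto
    have BI: "B = (\<integral>w. case_prod F w \<partial>(mu \<Otimes>\<^sub>M mu))"
      unfolding B_def p_def Ss_def using Bracket[OF Sm Sr pc, of Q]
      by (simp add: F_def Ss_def case_prod_beta')
    have "(\<integral>x0. (G x0)\<^sup>2 \<partial>mu) \<le> (\<integral>x0. c * H x0 powr a \<partial>mu)"
      using jensen_powr(1)[OF mu_prob Hi H0 a0] a_range G2i pt
      by (intro integral_mono_AE) (auto elim: AE_mp)
    also have "\<dots> = c * (\<integral>x0. H x0 powr a \<partial>mu)" by simp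
    also have "\<dots> \<le> c * (\<integral>x0. H x0 \<partial>mu) powr a"
      using jensen_powr(2)[OF mu_prob Hi H0 a0] a_range c0 by (intro mult_left_mono) auto
    also have "\<dots> = c * pow0 B a" using False by (simp add: pow0_def HI BI)
    finally show ?thesis using Var by linarith
  qed
  show ?thesis unfolding Let_def Q_def[symmetric] Ss_def[symmetric] p_def[symmetric] B_def[symmetric]
    by (rule goal)
qed



end
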